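(* Let $X$ be a real Banach space whose norm is Fréchet differentiable. Then an element $x\in\ell^1(X)$ is a right symmetric point of $\ell^1(X)$ if and only if there is an index $n$ such that $x_k=0$ for all $k\neq n$ and $x_n$ is a right symmetric point of $X$, i.e. $x=(0,\dots,0,x_n,0,\dots)$ with $x_n$ right symmetric in $X$.
   Context: $\ell^1(X)$ is the space of sequences $(x_n)_{n\in\mathbb{N}}$ in $X$ with $\|(x_n)\|=\sum_n\|x_n\|<\infty$. In a real normed space $Y$, $x\perp_{BJ}y$ means $\|x+\lambda y\|\ge\|x\|$ for all $\lambda\in\mathbb{R}$; $x$ is a right symmetric point if $y\perp_{BJ}x$ implies $x\perp_{BJ}y$ for all $y\in Y$. The norm of $X$ is Fréchet differentiable if for every non-zero $x$ there is $\varphi\in X^*$ with $\lim_{h\to0}\big|\|x+h\|-\|x\|-\varphi(h)\big|/\|h\|=0$. *)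

theory Defs
  imports "HOL-Analysis.Analysis"
begin

definition bj_orth :: "'a::real_normed_vector \<Rightarrow> 'a \<Rightarrow> bool" where
  "bj_orth x y \<longleftrightarrow> (\<forall>t::real. norm (x + t *\<^sub>R y) \<ge> norm x)"

definition right_symmetric :: "'a::real_normed_vector \<Rightarrow> bool" where
  "right_symmetric x \<longleftrightarrow> (\<forall>y. bj_orth y x \<longrightarrow> bj_orth x y)"

definition frechet_smooth_norm :: "'a::real_normed_vector itself \<Rightarrow> bool" where
  "frechet_smooth_norm _ \<longleftrightarrow>
     (\<forall>x::'a. x \<noteq> 0 \<longrightarrow> (\<exists>\<phi>. (norm has_derivative \<phi>) (at x)))"

definition l1 :: "(nat \<Rightarrow> 'a::real_normed_vector) set" where
  "l1 = {f. summable (\<lambda>n. norm (f n))}"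

definition l1_norm :: "(nat \<Rightarrow> 'a::real_normed_vector) \<Rightarrow> real" where
  "l1_norm f = (\<Sum>n. norm (f n))"

definition l1_bj_orth :: "(nat \<Rightarrow> 'a::real_normed_vector) \<Rightarrow> (nat \<Rightarrow> 'a) \<Rightarrow> bool" where
  "l1_bj_orth f g \<longleftrightarrow> (\<forall>t::real. l1_norm (\<lambda>n. f n + t *\<^sub>R g n) \<ge> l1_norm f)"

definition l1_right_symmetric :: "(nat \<Rightarrow> 'a::real_normed_vector) \<Rightarrow> bool" where
  "l1_right_symmetric f \<longleftrightarrow> (\<forall>g\<in>l1. l1_bj_orth g f \<longrightarrow> l1_bj_orth f g)"

end

theory Submission
  imports Defs
begin

lemma suminf_upd:
  fixes f h :: "nat \<Rightarrow> real"
  assumes s: "summable f" and e: "\<And>k. k \<noteq> m \<Longrightarrow> h k = f k"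
  shows "summable h" "suminf h = suminf f - f m + h m"
proof -
  define c where "c = h m - f m"
  have hf: "h = (\<lambda>k. f k + (if k = m then c else 0))"
    using e by (auto simp: fun_eq_iff c_def)
  have s2: "(\<lambda>k. if k = m then c else 0) sums c"
    using sums_single[of m "\<lambda>_. c"] by simp
  have "h sums (suminf f + c)"
    unfolding hf by (rule sums_add[OF summable_sums[OF s] s2])
  then show "summable h" "suminf h = suminf f - f m + h m"
    by (auto simp: sums_iff c_def)
qed

lemma l1_single:
  fixes f :: "nat \<Rightarrow> 'a::real_normed_vector"
  assumes "\<And>k. k \<noteq> n \<Longrightarrow> f k = 0"
  shows "f \<in> l1" "l1_norm f = norm (f n)"
proof -
  have "(\<lambda>k. norm (f k)) = (\<lambda>k. if k = n then norm (f n) else 0)"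
    using assms by (auto simp: fun_eq_iff)
  moreover have "(\<lambda>k. if k = n then norm (f n) else 0) sums norm (f n)"
    using sums_single[of n "\<lambda>_. norm (f n)"] by simp
  ultimately have "(\<lambda>k. norm (f k)) sums norm (f n)" by simp
  then show "f \<in> l1" "l1_norm f = norm (f n)"
    by (auto simp: l1_def l1_norm_def sums_iff)
qed

lemma two_nonzero:
  fixes x :: "nat \<Rightarrow> 'a::real_normed_vector"
  assumes x: "x \<in> l1" and m: "x m \<noteq> 0" and n: "x n \<noteq> 0" and mn: "m \<noteq> n"
    and le: "norm (x m) \<le> norm (x n)"
  shows "\<not> l1_right_symmetric x"
proof
  assume rs: "l1_right_symmetric x"
  define A where "A = norm (x m)"
  define S where "S = (\<Sum>k. norm (x k))"
  have sx: "summable (\<lambda>k. norm (x k))" using x by (simp add: l1_def)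
  have Apos: "A > 0" using m by (simp add: A_def)
  have "sum (\<lambda>k. norm (x k)) {m, n} \<le> S"
    unfolding S_def by (rule sum_le_suminf[OF sx]) auto
  hence SA: "S \<ge> A + norm (x n)" using mn by (simp add: A_def)
  define g where "g = (\<lambda>k. if k = m then x m else 0)"
  have gl1: "g \<in> l1" and gn: "l1_norm g = A"
    using l1_single[of m g] by (auto simp: g_def A_def)
  have "l1_bj_orth g x"
    unfolding l1_bj_orth_def
  proof
    fix t :: real
    have sm: "summable (\<lambda>k. \<bar>t\<bar> * norm (x k))" using summable_mult[OF sx] .
    have "l1_norm (\<lambda>k. g k + t *\<^sub>R x k) = (\<Sum>k. \<bar>t\<bar> * norm (x k)) - \<bar>t\<bar> * A + norm (x m + t *\<^sub>R x m)"
      unfolding l1_norm_def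
      by (subst suminf_upd(2)[OF sm, of m]) (auto simp: g_def A_def)
    also have "(\<Sum>k. \<bar>t\<bar> * norm (x k)) = \<bar>t\<bar> * S"
      unfolding S_def by (rule suminf_mult[OF sx])
    also have "x m + t *\<^sub>R x m = (1 + t) *\<^sub>R x m" by (simp add: algebra_simps)
    also have "norm ((1 + t) *\<^sub>R x m) = \<bar>1 + t\<bar> * A" by (simp add: A_def)
    finally have eq: "l1_norm (\<lambda>k. g k + t *\<^sub>R x k) = \<bar>t\<bar> * (S - A) + \<bar>1 + t\<bar> * A"
      by (simp add: algebra_simps)
    have "\<bar>t\<bar> * A \<le> \<bar>t\<bar> * (S - A)"
      using SA le by (intro mult_left_mono) (auto simp: A_def)
    moreover have "1 * A \<le> (\<bar>t\<bar> + \<bar>1 + t\<bar>) * A"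
      using Apos by (intro mult_right_mono) auto
    ultimately show "l1_norm g \<le> l1_norm (\<lambda>k. g k + t *\<^sub>R x k)"
      unfolding eq gn by (simp add: algebra_simps)
  qed
  hence "l1_bj_orth x g" using rs gl1 by (auto simp: l1_right_symmetric_def)
  hence "l1_norm x \<le> l1_norm (\<lambda>k. x k + (-1/2) *\<^sub>R g k)"
    unfolding l1_bj_orth_def by blast
  moreover have "l1_norm (\<lambda>k. x k + (-1/2) *\<^sub>R g k) = S - A + A / 2"
  proof -
    have "x m + (-1/2) *\<^sub>R x m = (1 + (-1/2)) *\<^sub>R x m"
      by (simp only: scaleR_add_left scaleR_one)
    also have "(1 + (-1/2::real)) = 1/2" by simp
    finally have "x m + (-1/2) *\<^sub>R x m = (1/2) *\<^sub>R x m" .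
    hence "norm (x m + (-1/2) *\<^sub>R x m) = A / 2" by (simp add: A_def)
    then show ?thesis
      unfolding l1_norm_def S_def
      by (subst suminf_upd(2)[OF sx, of m]) (auto simp: g_def A_def)
  qed
  ultimately show False using Apos by (simp add: l1_norm_def S_def)
qed

lemma single_rs_imp:
  fixes x :: "nat \<Rightarrow> 'a::real_normed_vector"
  assumes z: "\<And>k. k \<noteq> n \<Longrightarrow> x k = 0" and rs: "l1_right_symmetric x"
  shows "right_symmetric (x n)"
  unfolding right_symmetric_def
proof (intro allI impI)
  fix y assume o: "bj_orth y (x n)"
  define g where "g = (\<lambda>k. if k = n then y else 0)"
  have gl1: "g \<in> l1" and gn: "l1_norm g = norm y"
    using l1_single[of n g] by (auto simp: g_def)
  have "l1_bj_orth g x"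
    unfolding l1_bj_orth_def
  proof
    fix t :: real
    have "l1_norm (\<lambda>k. g k + t *\<^sub>R x k) = norm (y + t *\<^sub>R x n)"
      using l1_single(2)[of n "\<lambda>k. g k + t *\<^sub>R x k"] z by (auto simp: g_def)
    then show "l1_norm g \<le> l1_norm (\<lambda>k. g k + t *\<^sub>R x k)"
      using o gn by (simp add: bj_orth_def)
  qed
  hence xg: "l1_bj_orth x g" using rs gl1 by (auto simp: l1_right_symmetric_def)
  show "bj_orth (x n) y"
    unfolding bj_orth_def
  proof
    fix t :: real
    have "l1_norm (\<lambda>k. x k + t *\<^sub>R g k) = norm (x n + t *\<^sub>R y)"
      using l1_single(2)[of n "\<lambda>k. x k + t *\<^sub>R g k"] z by (auto simp: g_def)
    moreover have "l1_norm x = norm (x n)" using l1_single(2)[of n x] z by auto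
    ultimately show "norm (x n) \<le> norm (x n + t *\<^sub>R y)"
      using xg unfolding l1_bj_orth_def by metis
  qed
qed

lemma single_rs_conv:
  fixes x :: "nat \<Rightarrow> 'a::real_normed_vector"
  assumes z: "\<And>k. k \<noteq> n \<Longrightarrow> x k = 0" and rs: "right_symmetric (x n)"
  shows "l1_right_symmetric x"
  unfolding l1_right_symmetric_def
proof (intro ballI impI)
  fix g :: "nat \<Rightarrow> 'a" assume gl1: "g \<in> l1" and go: "l1_bj_orth g x"
  have sg: "summable (\<lambda>k. norm (g k))" using gl1 by (simp add: l1_def)
  define G where "G = (\<Sum>k. norm (g k))"
  have Gge: "norm (g n) \<le> G"
    using sum_le_suminf[OF sg, of "{n}"] by (simp add: G_def)
  have xn: "l1_norm x = norm (x n)" using l1_single(2)[of n x] z by auto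
  have "bj_orth (g n) (x n)"
    unfolding bj_orth_def
  proof
    fix t :: real
    have "l1_norm (\<lambda>k. g k + t *\<^sub>R x k) = G - norm (g n) + norm (g n + t *\<^sub>R x n)"
      unfolding l1_norm_def G_def
      by (subst suminf_upd(2)[OF sg, of n]) (auto simp: z)
    moreover have "l1_norm g \<le> l1_norm (\<lambda>k. g k + t *\<^sub>R x k)"
      using go by (simp add: l1_bj_orth_def)
    ultimately show "norm (g n) \<le> norm (g n + t *\<^sub>R x n)"
      by (simp add: l1_norm_def G_def)
  qed
  hence o: "bj_orth (x n) (g n)" using rs by (simp add: right_symmetric_def)
  show "l1_bj_orth x g"
    unfolding l1_bj_orth_def
  proof
    fix t :: real
    have sm: "summable (\<lambda>k. \<bar>t\<bar> * norm (g k))" using summable_mult[OF sg] .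
    have "l1_norm (\<lambda>k. x k + t *\<^sub>R g k) = (\<Sum>k. \<bar>t\<bar> * norm (g k)) - \<bar>t\<bar> * norm (g n) + norm (x n + t *\<^sub>R g n)"
      unfolding l1_norm_def
      by (subst suminf_upd(2)[OF sm, of n]) (auto simp: z)
    also have "(\<Sum>k. \<bar>t\<bar> * norm (g k)) = \<bar>t\<bar> * G"
      unfolding G_def by (rule suminf_mult[OF sg])
    finally have eq: "l1_norm (\<lambda>k. x k + t *\<^sub>R g k) = \<bar>t\<bar> * (G - norm (g n)) + norm (x n + t *\<^sub>R g n)"
      by (simp add: algebra_simps)
    have "0 \<le> \<bar>t\<bar> * (G - norm (g n))" using Gge by simp
    moreover have "norm (x n) \<le> norm (x n + t *\<^sub>R g n)" using o by (simp add: bj_orth_def)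
    ultimately show "l1_norm x \<le> l1_norm (\<lambda>k. x k + t *\<^sub>R g k)"
      unfolding eq xn by linarith
  qed
qed

theorem corollary3p12:
  fixes x :: "nat \<Rightarrow> 'a::banach"
  assumes "frechet_smooth_norm TYPE('a)"
    and "x \<in> l1"
  shows "l1_right_symmetric x \<longleftrightarrow>
           (\<exists>n. (\<forall>k. k \<noteq> n \<longrightarrow> x k = 0) \<and> right_symmetric (x n))"
proof
  assume rs: "l1_right_symmetric x"
  show "\<exists>n. (\<forall>k. k \<noteq> n \<longrightarrow> x k = 0) \<and> right_symmetric (x n)"
  proof (cases "\<exists>n. x n \<noteq> 0")
    case False
    hence "\<forall>k. k \<noteq> 0 \<longrightarrow> x k = 0" by auto
    then show ?thesis using single_rs_imp[OF _ rs, of 0] by blast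
  next
    case True
    then obtain n where n: "x n \<noteq> 0" by blast
    show ?thesis
    proof (cases "\<forall>k. k \<noteq> n \<longrightarrow> x k = 0")
      case True
      then show ?thesis using single_rs_imp[OF _ rs, of n] by blast
    next
      case False
      then obtain m where m: "m \<noteq> n" "x m \<noteq> 0" by blast
      show ?thesis
      proof (cases "norm (x m) \<le> norm (x n)")
        case True
        then show ?thesis using two_nonzero[OF assms(2) m(2) n m(1)] rs by blast
      next
        case False
        then show ?thesis using two_nonzero[OF assms(2) n m(2) m(1)[symmetric]] rs by simp
      qed
    qed
  qed
next
  assume "\<exists>n. (\<forall>k. k \<noteq> n \<longrightarrow> x k = 0) \<and> right_symmetric (x n)"
  then show "l1_right_symmetric x" using single_rs_conv by blast
qed

end
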